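(* There exist a constant $c>0$ and, for infinitely many $T$, forecasts $\mathbf p^{(T)}\in[0,1]^T$ and outcomes $\mathbf x^{(T)}\in\{0,1\}^T$ such that $\mathrm{Cal}(\mathbf p^{(T)},\mathbf x^{(T)})\ge cT$, but for every bounded proper binary scoring rule $\ell$, $\mathrm{Reg}_\ell(\mathbf p^{(T)},\mathbf x^{(T)})=o(T)$ as $T\to\infty$.
   Context: A binary scoring rule is $\ell:[0,1]\times\{0,1\}\to\mathbb R$; with $\ell(p;q)=(1-q)\ell(p,0)+q\ell(p,1)$ it is proper if $\ell(p;p)\le\ell(p';p)$ for all $p,p'\in[0,1]$, and bounded if its values lie in $[-1,1]$. For $\mathbf x\in\{0,1\}^T$, $\mathbf p\in[0,1]^T$ and $\beta=\frac1T\sum_tx_t$, $\mathrm{Reg}_\ell(\mathbf p,\mathbf x)=\sum_t\ell(p_t,x_t)-\sum_t\ell(\beta,x_t)$. With $n_p=|\{t:p_t=p\}|$ and $m_p=|\{t:p_t=p,\ x_t=1\}|$, the calibration error is $\mathrm{Cal}(\mathbf p,\mathbf x)=\sum_p|p\,n_p-m_p|$ (sum over $p$ with $n_p>0$). *)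

theory Defs
  imports Complex_Main
begin

text \<open>A binary scoring rule is a function l :: real => nat => real; only its values on
  [0,1] x {0,1} matter. Outcomes are naturals in {0,1}; sequences of length T are
  functions nat => _ restricted to indices t < T.\<close>

definition exp_score :: "(real \<Rightarrow> nat \<Rightarrow> real) \<Rightarrow> real \<Rightarrow> real \<Rightarrow> real" where
  "exp_score l p q = (1 - q) * l p 0 + q * l p 1"

definition proper_rule :: "(real \<Rightarrow> nat \<Rightarrow> real) \<Rightarrow> bool" where
  "proper_rule l \<longleftrightarrow> (\<forall>p\<in>{0..1}. \<forall>p'\<in>{0..1}. exp_score l p p \<le> exp_score l p' p)"

definition bounded_rule :: "(real \<Rightarrow> nat \<Rightarrow> real) \<Rightarrow> bool" where
  "bounded_rule l \<longleftrightarrow> (\<forall>p\<in>{0..1}. \<forall>y\<in>{0::nat,1}. l p y \<in> {-1..1})"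

definition base_rate :: "nat \<Rightarrow> (nat \<Rightarrow> nat) \<Rightarrow> real" where
  "base_rate T x = (\<Sum>t<T. real (x t)) / real T"

definition Reg :: "(real \<Rightarrow> nat \<Rightarrow> real) \<Rightarrow> nat \<Rightarrow> (nat \<Rightarrow> real) \<Rightarrow> (nat \<Rightarrow> nat) \<Rightarrow> real" where
  "Reg l T p x = (\<Sum>t<T. l (p t) (x t)) - (\<Sum>t<T. l (base_rate T x) (x t))"

definition Cal :: "nat \<Rightarrow> (nat \<Rightarrow> real) \<Rightarrow> (nat \<Rightarrow> nat) \<Rightarrow> real" where
  "Cal T p x = (\<Sum>q\<in>p ` {..<T}.
      \<bar>q * real (card {t\<in>{..<T}. p t = q}) - real (card {t\<in>{..<T}. p t = q \<and> x t = 1})\<bar>)"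

end

theory Submission
  imports Defs
begin

lemma mono_rule:
  fixes l :: "real \<Rightarrow> nat \<Rightarrow> real"
  assumes pr: "proper_rule l" and u: "u \<in> {0..1}" and v: "v \<in> {0..1}" and uv: "u \<le> v"
  shows "l v 1 \<le> l u 1 \<and> l u 0 \<le> l v 0"
proof -
  have h1: "exp_score l u u \<le> exp_score l v u" using pr u v unfolding proper_rule_def by blast
  have h2: "exp_score l v v \<le> exp_score l u v" using pr u v unfolding proper_rule_def by blast
  define d0 where "d0 = l v 0 - l u 0"
  define d1 where "d1 = l v 1 - l u 1"
  have a: "(1-u)*d0 + u*d1 \<ge> 0" using h1 unfolding exp_score_def d0_def d1_def by (simp add: algebra_simps)
  have b: "(1-v)*d0 + v*d1 \<le> 0" using h2 unfolding exp_score_def d0_def d1_def by (simp add: algebra_simps)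
  have c: "(v-u)*(d1-d0) \<le> 0" using a b by (simp add: algebra_simps)
  have dd: "d1 \<le> d0"
  proof (cases "u = v")
    case True
    then show ?thesis unfolding d0_def d1_def by simp
  next
    case False
    then have "v - u > 0" using uv by simp
    then show ?thesis using c by (simp add: mult_le_0_iff)
  qed
  have "u*(d0-d1) \<ge> 0" using dd u by simp
  then have "d0 \<ge> 0" using a by (simp add: algebra_simps)
  moreover have "(1-v)*(d0-d1) \<ge> 0" using dd v by simp
  then have "d1 \<le> 0" using b by (simp add: algebra_simps)
  ultimately show ?thesis unfolding d0_def d1_def by simp
qed

lemma near_rule:
  fixes l :: "real \<Rightarrow> nat \<Rightarrow> real"
  assumes pr: "proper_rule l" and bd: "bounded_rule l" and u: "u \<in> {0..1}"
  shows "l (1/2) 0 + l (1/2) 1 \<le> l u 0 + l u 1 \<and>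
         l u 0 + l u 1 \<le> l (1/2) 0 + l (1/2) 1 + 8 * \<bar>u - 1/2\<bar>"
proof -
  have hh: "(1/2::real) \<in> {0..1}" by simp
  have h1: "exp_score l (1/2) (1/2) \<le> exp_score l u (1/2)" using pr u hh unfolding proper_rule_def by blast
  have h2: "exp_score l u u \<le> exp_score l (1/2) u" using pr u hh unfolding proper_rule_def by blast
  define a0 where "a0 = l u 0 - l (1/2) 0"
  define a1 where "a1 = l u 1 - l (1/2) 1"
  have b0: "\<bar>a0\<bar> \<le> 2" using bd u hh unfolding bounded_rule_def a0_def
    by (smt (verit) atLeastAtMost_iff insert_iff)
  have b1: "\<bar>a1\<bar> \<le> 2" using bd u hh unfolding bounded_rule_def a1_def
    by (smt (verit) atLeastAtMost_iff insert_iff)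
  have A: "a0 + a1 \<ge> 0" using h1 unfolding exp_score_def a0_def a1_def by (simp add: algebra_simps)
  have B: "(1-u)*a0 + u*a1 \<le> 0" using h2 unfolding exp_score_def a0_def a1_def by (simp add: algebra_simps)
  have C: "(a0+a1)/2 = (1-u)*a0 + u*a1 + (u - 1/2)*(a0 - a1)" by (simp add: field_simps)
  have D: "(u - 1/2)*(a0 - a1) \<le> \<bar>u - 1/2\<bar> * 4"
  proof -
    have "(u - 1/2)*(a0 - a1) \<le> \<bar>(u - 1/2)*(a0 - a1)\<bar>" by simp
    also have "\<dots> = \<bar>u - 1/2\<bar> * \<bar>a0 - a1\<bar>" by (simp add: abs_mult)
    also have "\<dots> \<le> \<bar>u - 1/2\<bar> * 4" using b0 b1 by (intro mult_left_mono) auto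
    finally show ?thesis .
  qed
  have E: "(a0+a1)/2 \<le> 0 + \<bar>u - 1/2\<bar> * 4" unfolding C by (rule add_mono[OF B D])
  have G: "\<And>X Y::real. Y/2 \<le> 0 + X*4 \<Longrightarrow> Y \<le> 8*X" by linarith
  have "a0 + a1 \<le> 8 * \<bar>u - 1/2\<bar>" by (rule G[OF E])
  then show ?thesis using A unfolding a0_def a1_def by simp
qed

definition xx :: "nat \<Rightarrow> nat" where "xx t = (if even t then 1 else 0)"

lemma sum_xx: "(\<Sum>t<2*m. real (xx t)) = real m"
  by (induction m) (auto simp: xx_def)

lemma tele:
  fixes l :: "real \<Rightarrow> nat \<Rightarrow> real" and P :: "nat \<Rightarrow> real"
  assumes pr: "proper_rule l"
  shows "(\<forall>t\<le>2*m. P t \<in> {0..1}) \<longrightarrow> (\<forall>s t. s \<le> t \<longrightarrow> t \<le> 2*m \<longrightarrow> P s \<le> P t) \<longrightarrow>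
    (\<Sum>k<m. l (P (2*k)) 0 + l (P (2*k)) 1) \<le> (\<Sum>t<2*m. l (P t) (xx t)) \<and>
    (\<Sum>t<2*m. l (P t) (xx t)) \<le> (\<Sum>k<m. l (P (2*k)) 0 + l (P (2*k)) 1) + l (P (2*m)) 0 - l (P 0) 0"
proof (induction m)
  case 0
  then show ?case by simp
next
  case (Suc m)
  show ?case
  proof (intro impI)
    assume r: "\<forall>t\<le>2 * Suc m. P t \<in> {0..1}" and mo: "\<forall>s t. s \<le> t \<longrightarrow> t \<le> 2 * Suc m \<longrightarrow> P s \<le> P t"
    have IH: "(\<Sum>k<m. l (P (2*k)) 0 + l (P (2*k)) 1) \<le> (\<Sum>t<2*m. l (P t) (xx t)) \<and>
      (\<Sum>t<2*m. l (P t) (xx t)) \<le> (\<Sum>k<m. l (P (2*k)) 0 + l (P (2*k)) 1) + l (P (2*m)) 0 - l (P 0) 0"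
      using Suc.IH r mo by auto
    have e: "(\<Sum>t<2*Suc m. l (P t) (xx t)) = (\<Sum>t<2*m. l (P t) (xx t)) + l (P (2*m)) 1 + l (P (2*m+1)) 0"
      by (simp add: xx_def)
    have e2: "(\<Sum>k<Suc m. l (P (2*k)) 0 + l (P (2*k)) 1) = (\<Sum>k<m. l (P (2*k)) 0 + l (P (2*k)) 1) + l (P (2*m)) 0 + l (P (2*m)) 1"
      by simp
    have m1: "l (P (2*m)) 0 \<le> l (P (2*m+1)) 0"
      using mono_rule[OF pr, of "P (2*m)" "P (2*m+1)"] r mo by auto
    have m2: "l (P (2*m+1)) 0 \<le> l (P (2*Suc m)) 0"
      using mono_rule[OF pr, of "P (2*m+1)" "P (2*Suc m)"] r mo by auto
    show "(\<Sum>k<Suc m. l (P (2*k)) 0 + l (P (2*k)) 1) \<le> (\<Sum>t<2*Suc m. l (P t) (xx t)) \<and>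
      (\<Sum>t<2*Suc m. l (P t) (xx t)) \<le> (\<Sum>k<Suc m. l (P (2*k)) 0 + l (P (2*k)) 1) + l (P (2*Suc m)) 0 - l (P 0) 0"
      unfolding e e2 using IH m1 m2 by linarith
  qed
qed


lemma sum_xx_f: "(\<Sum>t<2*m. (f::nat \<Rightarrow> real) (xx t)) = real m * (f 0 + f 1)"
  by (induction m) (auto simp: xx_def algebra_simps)

definition pp :: "nat \<Rightarrow> nat \<Rightarrow> real" where "pp T t = 1/2 + real t / (real T)^2"

lemma pp_small: assumes "T > 0" "t \<le> T" shows "1/2 \<le> pp T t \<and> pp T t \<le> 1/2 + 1 / real T"
proof -
  have "real t / (real T)^2 \<le> real T / (real T)^2"
    using assms by (intro divide_right_mono) auto
  also have "\<dots> = 1 / real T" using assms by (simp add: power2_eq_square)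
  finally show ?thesis unfolding pp_def by simp
qed

lemma pp_mono: "s \<le> t \<Longrightarrow> pp T s \<le> pp T t"
  unfolding pp_def by (simp add: divide_right_mono)

lemma pp_eq: assumes "T > 0" shows "pp T s = pp T t \<longleftrightarrow> s = t"
  using assms unfolding pp_def by (simp add: divide_right_mono)

lemma pp_inj: assumes "T > 0" shows "inj_on (pp T) {..<T}"
  using pp_eq[OF assms] unfolding inj_on_def by blast

lemma Cal_bound: assumes "T \<ge> 4" shows "Cal T (pp T) xx \<ge> real T / 4"
proof -
  have T0: "T > 0" using assms by simp
  have "Cal T (pp T) xx = (\<Sum>t<T. \<bar>pp T t * real (card {s\<in>{..<T}. pp T s = pp T t}) - real (card {s\<in>{..<T}. pp T s = pp T t \<and> xx s = 1})\<bar>)"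
    unfolding Cal_def by (subst sum.reindex[OF pp_inj[OF T0]]) (simp add: comp_def)
  also have "\<dots> = (\<Sum>t<T. \<bar>pp T t - real (xx t)\<bar>)"
  proof (rule sum.cong[OF refl])
    fix t assume t: "t \<in> {..<T}"
    have e1: "{s\<in>{..<T}. pp T s = pp T t} = {t}"
      using t by (auto simp: pp_eq[OF T0])
    have e2: "{s\<in>{..<T}. pp T s = pp T t \<and> xx s = 1} = (if xx t = 1 then {t} else {})"
      using t by (auto simp: pp_eq[OF T0])
    show "\<bar>pp T t * real (card {s\<in>{..<T}. pp T s = pp T t}) - real (card {s\<in>{..<T}. pp T s = pp T t \<and> xx s = 1})\<bar> = \<bar>pp T t - real (xx t)\<bar>"
      unfolding e1 e2 by (auto simp: xx_def)
  qed
  also have "\<dots> \<ge> (\<Sum>t<T. 1/4)"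
  proof (rule sum_mono)
    fix t assume t: "t \<in> {..<T}"
    have h: "1 / real T \<le> 1/4" using assms by (simp add: divide_simps)
    have "1/2 \<le> pp T t \<and> pp T t \<le> 1/2 + 1 / real T" using pp_small[OF T0, of t] t by simp
    then have "1/2 \<le> pp T t \<and> pp T t \<le> 3/4" using h by linarith
    then show "1/4 \<le> \<bar>pp T t - real (xx t)\<bar>"
      by (auto simp: xx_def)
  qed
  finally show ?thesis by simp
qed

lemma Reg_bound:
  fixes l :: "real \<Rightarrow> nat \<Rightarrow> real"
  assumes pr: "proper_rule l" and bd: "bounded_rule l" and m: "m \<ge> 2"
  shows "\<bar>Reg l (2*m) (pp (2*m)) xx\<bar> \<le> 6"
proof -
  define T where "T = 2*m"
  have T0: "T > 0" using m T_def by simp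
  have br: "base_rate T xx = 1/2" unfolding base_rate_def T_def sum_xx using m by simp
  have s2: "(\<Sum>t<T. l (1/2) (xx t)) = real m * (l (1/2) 0 + l (1/2) 1)"
    unfolding T_def by (rule sum_xx_f)
  have rng: "\<forall>t\<le>2*m. pp T t \<in> {0..1}"
  proof (intro allI impI)
    fix t assume "t \<le> 2*m"
    then have "t \<le> T" using T_def by simp
    moreover have "1 / real T \<le> 1/2" using m T_def by (simp add: divide_simps)
    ultimately show "pp T t \<in> {0..1}" using pp_small[OF T0, of t] by auto
  qed
  have tl: "(\<Sum>k<m. l (pp T (2*k)) 0 + l (pp T (2*k)) 1) \<le> (\<Sum>t<2*m. l (pp T t) (xx t)) \<and>
    (\<Sum>t<2*m. l (pp T t) (xx t)) \<le> (\<Sum>k<m. l (pp T (2*k)) 0 + l (pp T (2*k)) 1) + l (pp T (2*m)) 0 - l (pp T 0) 0"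
    using tele[OF pr, of m "pp T"] rng pp_mono by blast
  have lo: "(\<Sum>k<m. l (1/2) 0 + l (1/2) 1) \<le> (\<Sum>k<m. l (pp T (2*k)) 0 + l (pp T (2*k)) 1)"
    by (rule sum_mono) (use near_rule[OF pr bd] rng in auto)
  have hi: "(\<Sum>k<m. l (pp T (2*k)) 0 + l (pp T (2*k)) 1) \<le> (\<Sum>k<m. l (1/2) 0 + l (1/2) 1 + 8 / real T)"
  proof (rule sum_mono)
    fix k assume k: "k \<in> {..<m}"
    have "2*k \<le> T" using k T_def by simp
    then have a: "\<bar>pp T (2*k) - 1/2\<bar> \<le> 1 / real T" using pp_small[OF T0, of "2*k"] by auto
    have "2*k \<le> 2*m" using k by simp
    then have b: "l (pp T (2*k)) 0 + l (pp T (2*k)) 1 \<le> l (1/2) 0 + l (1/2) 1 + 8 * \<bar>pp T (2*k) - 1/2\<bar>"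
      using near_rule[OF pr bd] rng by blast
    show "l (pp T (2*k)) 0 + l (pp T (2*k)) 1 \<le> l (1/2) 0 + l (1/2) 1 + 8 / real T"
      using a b by simp
  qed
  have hi2: "(\<Sum>k<m. l (1/2) 0 + l (1/2) 1 + 8 / real T) = real m * (l (1/2) 0 + l (1/2) 1) + 4"
    using m unfolding T_def by (simp add: sum.distrib algebra_simps)
  have lo2: "(\<Sum>k<m. l (1/2) 0 + l (1/2) 1) = real m * (l (1/2) 0 + l (1/2) 1)" by simp
  have hb: "\<bar>l (pp T (2*m)) 0\<bar> \<le> 1 \<and> \<bar>l (pp T 0) 0\<bar> \<le> 1"
    using bd rng unfolding bounded_rule_def by (metis abs_le_iff atLeastAtMost_iff insert_iff le0 le_refl minus_le_iff)
  have "Reg l T (pp T) xx = (\<Sum>t<2*m. l (pp T t) (xx t)) - real m * (l (1/2) 0 + l (1/2) 1)"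
    unfolding Reg_def br s2 by (simp add: T_def)
  then have "\<bar>Reg l T (pp T) xx\<bar> \<le> 6" using tl lo hi hi2 lo2 hb by (simp add: abs_le_iff)
  then show ?thesis unfolding T_def .
qed

definition S0 :: "nat set" where "S0 = {T. \<exists>m::nat. m \<ge> 2 \<and> T = 2*m}"

lemma S0_inf: "infinite S0"
proof
  assume "finite S0"
  then obtain n where n: "\<forall>T\<in>S0. T \<le> n" unfolding finite_nat_set_iff_bounded_le by blast
  have "2*(n+2) \<in> S0" unfolding S0_def by (intro CollectI exI[of _ "n+2"]) simp
  then have "2*(n+2) \<le> n" using n by blast
  then show False by simp
qed

lemma S0_B: "\<forall>T\<in>S0. (\<forall>t<T. pp T t \<in> {0..1}) \<and> (\<forall>t<T. (\<lambda>T. xx) T t \<in> {0,1}) \<and>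
                 Cal T (pp T) ((\<lambda>T. xx) T) \<ge> 1/4 * real T"
proof
  fix T assume "T \<in> S0"
  then have T4: "T \<ge> 4" unfolding S0_def by auto
  have a: "\<forall>t<T. pp T t \<in> {0..1}"
  proof (intro allI impI)
    fix t assume tT: "t < T"
    have h: "1 / real T \<le> 1/2" using T4 by (simp add: divide_simps)
    have "1/2 \<le> pp T t \<and> pp T t \<le> 1/2 + 1 / real T" using pp_small[of T t] T4 tT by simp
    then show "pp T t \<in> {0..1}" using h by auto
  qed
  have b: "\<forall>t<T. xx t \<in> {0,1}" by (simp add: xx_def)
  have c: "Cal T (pp T) xx \<ge> 1/4 * real T" using Cal_bound[OF T4] by simp
  show "(\<forall>t<T. pp T t \<in> {0..1}) \<and> (\<forall>t<T. (\<lambda>T. xx) T t \<in> {0,1}) \<and>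
                 Cal T (pp T) ((\<lambda>T. xx) T) \<ge> 1/4 * real T"
    using a b c by simp
qed

lemma S0_C: "\<forall>l. proper_rule l \<and> bounded_rule l \<longrightarrow>
           (\<forall>\<epsilon>>0. \<exists>N. \<forall>T\<in>S0. T \<ge> N \<longrightarrow> \<bar>Reg l T (pp T) ((\<lambda>T. xx) T)\<bar> \<le> \<epsilon> * real T)"
proof (intro allI impI)
  fix l :: "real \<Rightarrow> nat \<Rightarrow> real" and \<epsilon> :: real
  assume lb: "proper_rule l \<and> bounded_rule l" and e: "\<epsilon> > 0"
  have "\<forall>T\<in>S0. T \<ge> nat \<lceil>6 / \<epsilon>\<rceil> \<longrightarrow> \<bar>Reg l T (pp T) xx\<bar> \<le> \<epsilon> * real T"
  proof (intro ballI impI)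
    fix T assume TS: "T \<in> S0" and TN: "nat \<lceil>6 / \<epsilon>\<rceil> \<le> T"
    obtain m where m: "m \<ge> 2" "T = 2*m" using TS unfolding S0_def by auto
    have "6 / \<epsilon> \<le> real T" using TN by linarith
    then have h6: "6 \<le> \<epsilon> * real T" using e by (simp add: divide_le_eq mult.commute)
    have "\<bar>Reg l T (pp T) xx\<bar> \<le> 6" using Reg_bound[of l m] lb m by simp
    then show "\<bar>Reg l T (pp T) xx\<bar> \<le> \<epsilon> * real T" using h6 by linarith
  qed
  then show "\<exists>N. \<forall>T\<in>S0. T \<ge> N \<longrightarrow> \<bar>Reg l T (pp T) ((\<lambda>T. xx) T)\<bar> \<le> \<epsilon> * real T"
    by blast
qed

theorem lemma4p1:
  shows "\<exists>c::real. c > 0 \<and> (\<exists>S::nat set. infinite S \<and>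
     (\<exists>(p::nat \<Rightarrow> nat \<Rightarrow> real) (x::nat \<Rightarrow> nat \<Rightarrow> nat).
        (\<forall>T\<in>S. (\<forall>t<T. p T t \<in> {0..1}) \<and> (\<forall>t<T. x T t \<in> {0,1}) \<and>
                 Cal T (p T) (x T) \<ge> c * real T) \<and>
        (\<forall>l. proper_rule l \<and> bounded_rule l \<longrightarrow>
           (\<forall>\<epsilon>>0. \<exists>N. \<forall>T\<in>S. T \<ge> N \<longrightarrow> \<bar>Reg l T (p T) (x T)\<bar> \<le> \<epsilon> * real T))))"
  apply (rule exI[where x="1/4"], rule conjI, simp)
  apply (rule exI[where x=S0], rule conjI, rule S0_inf)
  apply (rule exI[where x=pp], rule exI[where x="\<lambda>T. xx"])
  apply (rule conjI)
   apply (rule S0_B)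
  apply (rule S0_C)
  done

end
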